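(* Assume that $-L$ is positive, i.e. $-\lambda_\xi\ge0$ for all $\xi\in\mathcal I$, and let $0<r\le1$. Then $(I-L)^{-s/m}\in S_r(L^2(M))$ for every $s>\frac{s_0}{r}$.
   Context: Setting. $M$ is a compact manifold with boundary, interior $\mathring M$, positive measure $dx$. $L$ is a pseudo-differential operator of order $m$ on $\mathring M$ with fixed boundary conditions (BC); $L^*$ its adjoint with adjoint boundary conditions. There are a countable index set $\mathcal I$, $\lambda_\xi\in\mathbb C$, $u_\xi,v_\xi\in L^2(M)$ with $Lu_\xi=\lambda_\xi u_\xi$ ($u_\xi$ satisfying (BC)), $L^*v_\xi=\overline{\lambda_\xi}v_\xi$, $\|u_\xi\|_{L^2}=\|v_\xi\|_{L^2}=1$, $(u_\xi,v_\eta)_{L^2}=\delta_{\xi\eta}$, and $\{u_\xi\}$ a basis of $L^2(M)$. Put $\langle\xi\rangle=(1+|\lambda_\xi|^2)^{1/(2m)}$; $s_0\in\mathbb R$ is a number with $\sum_{\xi\in\mathcal I}\langle\xi\rangle^{-s_0}<\infty$ (assumed to exist). WZ-condition: $u_\xi,v_\xi$ zero-free on $M$ with $\inf_M|u_\xi|,\inf_M|v_\xi|\ge C\langle\xi\rangle^{-N}$ as $\langle\xi\rangle\to\infty$. $C_L^\infty(M)=\bigcap_k\mathrm{Dom}(L^k)$, and $\widehat f(\xi)=\int_M f\overline{v_\xi}\,dx$. The operator $(I-L)^{-s/m}$ is the $L$-Fourier multiplier with symbol $(1-\lambda_\xi)^{-s/m}$, i.e. $(I-L)^{-s/m}f=\sum_\xi(1-\lambda_\xi)^{-s/m}\widehat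 f(\xi)u_\xi$. $S_r(L^2(M))$ denotes the Schatten class of index $r$. *)

theory Defs
  imports "HOL-Analysis.Analysis"
begin

text \<open>The Hilbert space L^2(M) of a measure space M, realised on
  representatives: square-integrable complex functions, with equality
  understood almost everywhere (i.e. L2-norm of the difference is 0).\<close>

definition L2 :: "'a measure \<Rightarrow> ('a \<Rightarrow> complex) set" where
  "L2 M = {f. f \<in> borel_measurable M \<and> integrable M (\<lambda>x. (cmod (f x))\<^sup>2)}"

definition L2_norm :: "'a measure \<Rightarrow> ('a \<Rightarrow> complex) \<Rightarrow> real" where
  "L2_norm M f = sqrt (\<integral>x. (cmod (f x))\<^sup>2 \<partial>M)"

definition L2_inner :: "'a measure \<Rightarrow> ('a \<Rightarrow> complex) \<Rightarrow> ('a \<Rightarrow> complex) \<Rightarrow> complex" where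
  "L2_inner M f g = (\<integral>x. f x * cnj (g x) \<partial>M)"

definition L_fourier :: "'a measure \<Rightarrow> ('i \<Rightarrow> 'a \<Rightarrow> complex) \<Rightarrow> ('a \<Rightarrow> complex) \<Rightarrow> 'i \<Rightarrow> complex" where
  "L_fourier M v f \<xi> = L2_inner M f (v \<xi>)"

definition partial_series :: "nat set \<Rightarrow> (nat \<Rightarrow> 'a \<Rightarrow> complex) \<Rightarrow> nat \<Rightarrow> 'a \<Rightarrow> complex" where
  "partial_series I g n = (\<lambda>x. \<Sum>\<xi>\<in>I \<inter> {..<n}. g \<xi> x)"

definition is_L2_basis :: "'a measure \<Rightarrow> nat set \<Rightarrow> (nat \<Rightarrow> 'a \<Rightarrow> complex) \<Rightarrow> bool" where
  "is_L2_basis M I u \<longleftrightarrow>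
     (\<forall>f\<in>L2 M. \<exists>c. (\<forall>\<xi>. \<xi> \<notin> I \<longrightarrow> c \<xi> = 0) \<and>
        (\<lambda>n. L2_norm M (\<lambda>x. f x - partial_series I (\<lambda>\<xi> y. c \<xi> * u \<xi> y) n x)) \<longlonglongrightarrow> 0 \<and>
        (\<forall>d. (\<forall>\<xi>. \<xi> \<notin> I \<longrightarrow> d \<xi> = 0) \<and>
             (\<lambda>n. L2_norm M (\<lambda>x. f x - partial_series I (\<lambda>\<xi> y. d \<xi> * u \<xi> y) n x)) \<longlonglongrightarrow> 0
             \<longrightarrow> d = c))"

definition is_L_multiplier ::
  "'a measure \<Rightarrow> nat set \<Rightarrow> (nat \<Rightarrow> 'a \<Rightarrow> complex) \<Rightarrow> (nat \<Rightarrow> 'a \<Rightarrow> complex)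
     \<Rightarrow> (nat \<Rightarrow> complex) \<Rightarrow> (('a \<Rightarrow> complex) \<Rightarrow> ('a \<Rightarrow> complex)) \<Rightarrow> bool" where
  "is_L_multiplier M I u v \<sigma> T \<longleftrightarrow>
     (\<forall>f\<in>L2 M. T f \<in> L2 M \<and>
        (\<lambda>n. L2_norm M (\<lambda>x. T f x - partial_series I
               (\<lambda>\<xi> y. \<sigma> \<xi> * L_fourier M v f \<xi> * u \<xi> y) n x)) \<longlonglongrightarrow> 0)"

definition L2_linear :: "'a measure \<Rightarrow> (('a \<Rightarrow> complex) \<Rightarrow> ('a \<Rightarrow> complex)) \<Rightarrow> bool" where
  "L2_linear M K \<longleftrightarrow> (\<forall>f\<in>L2 M. K f \<in> L2 M) \<and>
     (\<forall>f\<in>L2 M. \<forall>g\<in>L2 M. \<forall>a::complex.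
        L2_norm M (\<lambda>x. K (\<lambda>y. a * f y + g y) x - (a * K f x + K g x)) = 0)"

definition L2_bounded :: "'a measure \<Rightarrow> (('a \<Rightarrow> complex) \<Rightarrow> ('a \<Rightarrow> complex)) \<Rightarrow> bool" where
  "L2_bounded M T \<longleftrightarrow> L2_linear M T \<and>
     (\<exists>B. \<forall>f\<in>L2 M. L2_norm M (T f) \<le> B * L2_norm M f)"

definition L2_rank_le :: "'a measure \<Rightarrow> nat \<Rightarrow> (('a \<Rightarrow> complex) \<Rightarrow> ('a \<Rightarrow> complex)) \<Rightarrow> bool" where
  "L2_rank_le M n K \<longleftrightarrow> L2_linear M K \<and>
     (\<exists>g::nat \<Rightarrow> 'a \<Rightarrow> complex. (\<forall>j<n. g j \<in> L2 M) \<and>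
        (\<forall>f\<in>L2 M. \<exists>c::nat \<Rightarrow> complex.
            L2_norm M (\<lambda>x. K f x - (\<Sum>j<n. c j * g j x)) = 0))"

text \<open>Singular values (approximation numbers), indexed from 0:
  s_n(T) = inf { ||T - K|| : rank K <= n }.\<close>
definition singular_value :: "'a measure \<Rightarrow> (('a \<Rightarrow> complex) \<Rightarrow> ('a \<Rightarrow> complex)) \<Rightarrow> nat \<Rightarrow> real" where
  "singular_value M T n = Inf {B. B \<ge> 0 \<and> (\<exists>K. L2_rank_le M n K \<and>
       (\<forall>f\<in>L2 M. L2_norm M (\<lambda>x. T f x - K f x) \<le> B * L2_norm M f))}"

definition schatten_class :: "'a measure \<Rightarrow> real \<Rightarrow> (('a \<Rightarrow> complex) \<Rightarrow> ('a \<Rightarrow> complex)) \<Rightarrow> bool" where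
  "schatten_class M r T \<longleftrightarrow> L2_bounded M T \<and> summable (\<lambda>n. (singular_value M T n) powr r)"

definition japanese_bracket :: "real \<Rightarrow> complex \<Rightarrow> real" where
  "japanese_bracket m lam = (1 + (cmod lam)\<^sup>2) powr (1 / (2 * m))"

end

theory Submission
  imports Defs
begin

lemma L2_memI: "f \<in> borel_measurable M \<Longrightarrow> integrable M (\<lambda>x. (cmod (f x))\<^sup>2) \<Longrightarrow> f \<in> L2 M"
  by (simp add: L2_def)

lemma L2_meas: "f \<in> L2 M \<Longrightarrow> f \<in> borel_measurable M"
  by (simp add: L2_def)

lemma L2_int: "f \<in> L2 M \<Longrightarrow> integrable M (\<lambda>x. (cmod (f x))\<^sup>2)"
  by (simp add: L2_def)

lemma borel_measurable_cnj' [measurable]: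
  "g \<in> borel_measurable M \<Longrightarrow> (\<lambda>x. cnj (g x)) \<in> borel_measurable M"
  by (rule borel_measurable_continuous_on[where f=cnj]) (auto intro: continuous_on_id)

lemma real_ab_le: fixes a b :: real
  shows "2 * (a * b) \<le> a\<^sup>2 + b\<^sup>2"
proof -
  have "0 \<le> (a - b)\<^sup>2" by simp
  moreover have "(a - b)\<^sup>2 = a\<^sup>2 + b\<^sup>2 - 2 * a * b" by (rule power2_diff)
  ultimately show ?thesis by linarith
qed

lemma real_ab_le': fixes a b :: real
  assumes "0 \<le> a" "0 \<le> b" shows "a * b \<le> a\<^sup>2 + b\<^sup>2"
proof -
  have "0 \<le> a * b" using assms by simp
  then show ?thesis using real_ab_le[of a b] by linarith
qed

lemma real_sum_sq_le: fixes a b :: real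
  shows "(a + b)\<^sup>2 \<le> 2 * a\<^sup>2 + 2 * b\<^sup>2"
proof -
  have "(a + b)\<^sup>2 = a\<^sup>2 + b\<^sup>2 + 2 * a * b" by (rule power2_sum)
  then show ?thesis using real_ab_le[of a b] by linarith
qed

lemma L2_prod_integrable:
  assumes "f \<in> L2 M" "g \<in> L2 M"
  shows "integrable M (\<lambda>x. f x * cnj (g x))"
proof (rule Bochner_Integration.integrable_bound)
  show "integrable M (\<lambda>x. (cmod (f x))\<^sup>2 + (cmod (g x))\<^sup>2)"
    using assms L2_int by (rule_tac Bochner_Integration.integrable_add) auto
  show "(\<lambda>x. f x * cnj (g x)) \<in> borel_measurable M"
    using L2_meas[OF assms(1)] L2_meas[OF assms(2)] by measurable
  show "AE x in M. norm (f x * cnj (g x)) \<le> norm ((cmod (f x))\<^sup>2 + (cmod (g x))\<^sup>2)"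
  proof (rule AE_I2)
    fix x
    have "cmod (f x) * cmod (g x) \<le> (cmod (f x))\<^sup>2 + (cmod (g x))\<^sup>2"
      by (rule real_ab_le') auto
    then show "norm (f x * cnj (g x)) \<le> norm ((cmod (f x))\<^sup>2 + (cmod (g x))\<^sup>2)"
      by (simp add: norm_mult)
  qed
qed

lemma L2_zero: "(\<lambda>x. 0) \<in> L2 M"
  by (rule L2_memI) auto

lemma L2_add:
  assumes "f \<in> L2 M" "g \<in> L2 M"
  shows "(\<lambda>x. f x + g x) \<in> L2 M"
proof (rule L2_memI)
  show "(\<lambda>x. f x + g x) \<in> borel_measurable M" using L2_meas[OF assms(1)] L2_meas[OF assms(2)] by measurable
  show "integrable M (\<lambda>x. (cmod (f x + g x))\<^sup>2)"
  proof (rule Bochner_Integration.integrable_bound)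
    show "integrable M (\<lambda>x. 2 * (cmod (f x))\<^sup>2 + 2 * (cmod (g x))\<^sup>2)"
      using assms L2_int by (rule_tac Bochner_Integration.integrable_add) auto
    show "(\<lambda>x. (cmod (f x + g x))\<^sup>2) \<in> borel_measurable M"
      using L2_meas[OF assms(1)] L2_meas[OF assms(2)] by measurable
    show "AE x in M. norm ((cmod (f x + g x))\<^sup>2) \<le> norm (2 * (cmod (f x))\<^sup>2 + 2 * (cmod (g x))\<^sup>2)"
    proof (rule AE_I2)
      fix x
      have t: "cmod (f x + g x) \<le> cmod (f x) + cmod (g x)" by (rule norm_triangle_ineq)
      have "(cmod (f x + g x))\<^sup>2 \<le> (cmod (f x) + cmod (g x))\<^sup>2"
        using t by (intro power_mono) auto
      also have "\<dots> \<le> 2 * (cmod (f x))\<^sup>2 + 2 * (cmod (g x))\<^sup>2"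
        by (rule real_sum_sq_le)
      finally show "norm ((cmod (f x + g x))\<^sup>2) \<le> norm (2 * (cmod (f x))\<^sup>2 + 2 * (cmod (g x))\<^sup>2)"
        by simp
    qed
  qed
qed

lemma L2_cmult:
  assumes "f \<in> L2 M"
  shows "(\<lambda>x. c * f x) \<in> L2 M"
proof (rule L2_memI)
  show "(\<lambda>x. c * f x) \<in> borel_measurable M" using L2_meas[OF assms(1)] by measurable
  have "integrable M (\<lambda>x. (cmod c)\<^sup>2 * (cmod (f x))\<^sup>2)"
    using assms L2_int by auto
  then show "integrable M (\<lambda>x. (cmod (c * f x))\<^sup>2)"
    by (simp add: norm_mult power_mult_distrib)
qed

lemma L2_diff:
  assumes "f \<in> L2 M" "g \<in> L2 M"
  shows "(\<lambda>x. f x - g x) \<in> L2 M"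
proof -
  have "(\<lambda>x. f x + (-1) * g x) \<in> L2 M" using assms by (intro L2_add L2_cmult)
  then show ?thesis by simp
qed

lemma L2_sum:
  assumes "\<And>i. i \<in> G \<Longrightarrow> a i \<in> L2 M"
  shows "(\<lambda>x. \<Sum>i\<in>G. c i * a i x) \<in> L2 M"
  using assms
proof (induction G rule: infinite_finite_induct)
  case (infinite A) then show ?case by (simp add: L2_zero)
next
  case empty then show ?case by (simp add: L2_zero)
next
  case (insert i G)
  then show ?case by (simp add: L2_add L2_cmult)
qed

definition N2 :: "'a measure \<Rightarrow> ('a \<Rightarrow> complex) \<Rightarrow> real" where
  "N2 M f = (\<integral>x. (cmod (f x))\<^sup>2 \<partial>M)"

lemma N2_nonneg: "N2 M f \<ge> 0"
  unfolding N2_def by (rule integral_nonneg_AE) auto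

lemma L2_norm_N2: "L2_norm M f = sqrt (N2 M f)"
  by (simp add: L2_norm_def N2_def)

lemma inner_self: "L2_inner M f f = complex_of_real (N2 M f)"
proof -
  have "L2_inner M f f = (\<integral>x. complex_of_real ((cmod (f x))\<^sup>2) \<partial>M)"
    unfolding L2_inner_def by (simp only: complex_norm_square)
  also have "\<dots> = complex_of_real (N2 M f)"
    unfolding N2_def by (rule integral_complex_of_real)
  finally show ?thesis .
qed

lemma inner_cnj: "cnj (L2_inner M f g) = L2_inner M g f"
  unfolding L2_inner_def by (simp add: Bochner_Integration.integral_cnj[symmetric] mult.commute del: Bochner_Integration.integral_cnj)


lemma inner_sum_left:
  assumes "\<And>i. i \<in> G \<Longrightarrow> a i \<in> L2 M" "k \<in> L2 M"
  shows "L2_inner M (\<lambda>x. \<Sum>i\<in>G. c i * a i x) k = (\<Sum>i\<in>G. c i * L2_inner M (a i) k)"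
proof -
  have "L2_inner M (\<lambda>x. \<Sum>i\<in>G. c i * a i x) k = (\<integral>x. (\<Sum>i\<in>G. c i * (a i x * cnj (k x))) \<partial>M)"
    unfolding L2_inner_def by (simp add: sum_distrib_right mult.assoc)
  also have "\<dots> = (\<Sum>i\<in>G. (\<integral>x. c i * (a i x * cnj (k x)) \<partial>M))"
    by (rule Bochner_Integration.integral_sum, rule Bochner_Integration.integrable_mult_right,
        rule L2_prod_integrable) (use assms in auto)
  also have "\<dots> = (\<Sum>i\<in>G. c i * L2_inner M (a i) k)"
    unfolding L2_inner_def by simp
  finally show ?thesis .
qed

lemma inner_sum_right:
  assumes "\<And>i. i \<in> G \<Longrightarrow> a i \<in> L2 M" "k \<in> L2 M"
  shows "L2_inner M k (\<lambda>x. \<Sum>i\<in>G. c i * a i x) = (\<Sum>i\<in>G. cnj (c i) * L2_inner M k (a i))"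
proof -
  have "L2_inner M k (\<lambda>x. \<Sum>i\<in>G. c i * a i x) = cnj (L2_inner M (\<lambda>x. \<Sum>i\<in>G. c i * a i x) k)"
    by (simp add: inner_cnj)
  also have "\<dots> = cnj (\<Sum>i\<in>G. c i * L2_inner M (a i) k)"
    using inner_sum_left[of G a M k c] assms by simp
  also have "\<dots> = (\<Sum>i\<in>G. cnj (c i) * L2_inner M k (a i))"
    by (simp add: inner_cnj)
  finally show ?thesis .
qed

lemma inner_diff_left:
  assumes "f \<in> L2 M" "g \<in> L2 M" "k \<in> L2 M"
  shows "L2_inner M (\<lambda>x. f x - g x) k = L2_inner M f k - L2_inner M g k"
  unfolding L2_inner_def
  using Bochner_Integration.integral_diff[OF L2_prod_integrable[OF assms(1,3)] L2_prod_integrable[OF assms(2,3)]]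
  by (simp add: left_diff_distrib)

lemma inner_diff_right:
  assumes "f \<in> L2 M" "g \<in> L2 M" "k \<in> L2 M"
  shows "L2_inner M k (\<lambda>x. f x - g x) = L2_inner M k f - L2_inner M k g"
proof -
  have "L2_inner M k (\<lambda>x. f x - g x) = cnj (L2_inner M (\<lambda>x. f x - g x) k)"
    by (simp add: inner_cnj)
  also have "\<dots> = L2_inner M k f - L2_inner M k g"
    using inner_diff_left[OF assms] by (simp add: inner_cnj)
  finally show ?thesis .
qed

lemma inner_add_left:
  assumes "f \<in> L2 M" "g \<in> L2 M" "k \<in> L2 M"
  shows "L2_inner M (\<lambda>x. f x + g x) k = L2_inner M f k + L2_inner M g k"
  unfolding L2_inner_def
  using Bochner_Integration.integral_add[OF L2_prod_integrable[OF assms(1,3)] L2_prod_integrable[OF assms(2,3)]]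
  by (simp add: distrib_right)

lemma inner_add_right:
  assumes "f \<in> L2 M" "g \<in> L2 M" "k \<in> L2 M"
  shows "L2_inner M k (\<lambda>x. f x + g x) = L2_inner M k f + L2_inner M k g"
proof -
  have "L2_inner M k (\<lambda>x. f x + g x) = cnj (L2_inner M (\<lambda>x. f x + g x) k)"
    by (simp add: inner_cnj)
  also have "\<dots> = L2_inner M k f + L2_inner M k g"
    using inner_add_left[OF assms] by (simp add: inner_cnj)
  finally show ?thesis .
qed

lemma inner_cmult_left:
  "L2_inner M (\<lambda>x. c * f x) k = c * L2_inner M f k"
  unfolding L2_inner_def by (simp add: mult.assoc)

lemma inner_cmult_right:
  "L2_inner M k (\<lambda>x. c * f x) = cnj c * L2_inner M k f"
  unfolding L2_inner_def by (simp add: mult.assoc mult.left_commute)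

lemma N2_diff:
  assumes "f \<in> L2 M" "g \<in> L2 M"
  shows "N2 M (\<lambda>x. f x - g x) = N2 M f + N2 M g - 2 * Re (L2_inner M f g)"
proof -
  have d: "(\<lambda>x. f x - g x) \<in> L2 M" using assms by (rule L2_diff)
  have "complex_of_real (N2 M (\<lambda>x. f x - g x)) = L2_inner M (\<lambda>x. f x - g x) (\<lambda>x. f x - g x)"
    by (simp add: inner_self)
  also have "\<dots> = L2_inner M f f - L2_inner M f g - (L2_inner M g f - L2_inner M g g)"
    using assms d by (simp add: inner_diff_left inner_diff_right)
  also have "\<dots> = complex_of_real (N2 M f) + complex_of_real (N2 M g)
      - (L2_inner M f g + cnj (L2_inner M f g))"
    by (simp add: inner_self inner_cnj)
  also have "\<dots> = complex_of_real (N2 M f + N2 M g - 2 * Re (L2_inner M f g))"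
    by (simp add: complex_add_cnj)
  finally show ?thesis by (simp only: of_real_eq_iff)
qed

lemma N2_add:
  assumes "f \<in> L2 M" "g \<in> L2 M"
  shows "N2 M (\<lambda>x. f x + g x) = N2 M f + N2 M g + 2 * Re (L2_inner M f g)"
proof -
  have m: "(\<lambda>x. (-1) * g x) \<in> L2 M" using assms by (intro L2_cmult)
  have "N2 M (\<lambda>x. f x + g x) = N2 M (\<lambda>x. f x - (-1) * g x)" by simp
  also have "\<dots> = N2 M f + N2 M (\<lambda>x. (-1) * g x) - 2 * Re (L2_inner M f (\<lambda>x. (-1) * g x))"
    by (rule N2_diff[OF assms(1) m])
  also have "N2 M (\<lambda>x. (-1) * g x) = N2 M g" unfolding N2_def by (simp add: norm_mult)
  also have "L2_inner M f (\<lambda>x. (-1) * g x) = - L2_inner M f g" using inner_cmult_right[of M f "-1" g] by simp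
  finally show ?thesis by simp
qed

lemma N2_zero_AE:
  assumes "h \<in> L2 M" "N2 M h = 0"
  shows "AE x in M. h x = 0"
proof -
  have "AE x in M. (cmod (h x))\<^sup>2 = 0"
    using integral_nonneg_eq_0_iff_AE[of M "\<lambda>x. (cmod (h x))\<^sup>2"] assms L2_int
    unfolding N2_def by auto
  then show ?thesis by auto
qed

lemma inner_AE_right:
  assumes "f \<in> L2 M" "g \<in> L2 M" "g' \<in> L2 M" "AE x in M. g x = g' x"
  shows "L2_inner M f g = L2_inner M f g'"
  unfolding L2_inner_def
proof (rule integral_cong_AE)
  note [measurable] = L2_meas[OF assms(1)] L2_meas[OF assms(2)] L2_meas[OF assms(3)]
  show "(\<lambda>x. f x * cnj (g x)) \<in> borel_measurable M" by measurable
  show "(\<lambda>x. f x * cnj (g' x)) \<in> borel_measurable M" by measurable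
  show "AE x in M. f x * cnj (g x) = f x * cnj (g' x)" using assms(4) by auto
qed

lemma N2_cmult: "N2 M (\<lambda>x. c * f x) = (cmod c)\<^sup>2 * N2 M f"
  unfolding N2_def by (simp add: norm_mult power_mult_distrib)

lemma cauchy_schwarz:
  assumes f: "f \<in> L2 M" and g: "g \<in> L2 M"
  shows "(cmod (L2_inner M f g))\<^sup>2 \<le> N2 M f * N2 M g"
proof (cases "N2 M g = 0")
  case True
  then have "AE x in M. g x = 0" using N2_zero_AE g by blast
  then have "L2_inner M f g = L2_inner M f (\<lambda>x. 0)"
    using inner_AE_right[OF f g L2_zero] by blast
  then show ?thesis using N2_nonneg[of M f] True by (simp add: L2_inner_def)
next
  case False
  define n where "n = N2 M g"
  define p where "p = L2_inner M f g"
  have npos: "n > 0" using False N2_nonneg[of M g] unfolding n_def by linarith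
  define a where "a = p / complex_of_real n"
  have ag: "(\<lambda>x. a * g x) \<in> L2 M" using g by (rule L2_cmult)
  have "0 \<le> N2 M (\<lambda>x. f x - a * g x)" by (rule N2_nonneg)
  also have "\<dots> = N2 M f + (cmod a)\<^sup>2 * n - 2 * Re (cnj a * p)"
    using N2_diff[OF f ag] by (simp add: N2_cmult inner_cmult_right n_def p_def)
  also have "(cmod a)\<^sup>2 * n = (cmod p)\<^sup>2 / n"
    using npos unfolding a_def by (simp add: norm_divide power_divide power2_eq_square)
  also have "Re (cnj a * p) = (cmod p)\<^sup>2 / n"
  proof -
    have "cnj a * p = complex_of_real ((cmod p)\<^sup>2 / n)"
      unfolding a_def using npos
      by (simp add: complex_norm_square[symmetric] mult.commute)
    then show ?thesis by simp
  qed
  finally have "(cmod p)\<^sup>2 / n \<le> N2 M f" by simp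
  then show ?thesis using npos unfolding n_def[symmetric] p_def[symmetric]
    by (simp add: divide_le_eq mult.commute)
qed

lemma L2_norm_triangle:
  assumes f: "f \<in> L2 M" and g: "g \<in> L2 M"
  shows "L2_norm M (\<lambda>x. f x + g x) \<le> L2_norm M f + L2_norm M g"
proof -
  have cs: "cmod (L2_inner M f g) \<le> sqrt (N2 M f) * sqrt (N2 M g)"
    using cauchy_schwarz[OF f g] N2_nonneg[of M f] N2_nonneg[of M g]
    by (metis real_le_rsqrt real_sqrt_mult norm_ge_zero)
  have "Re (L2_inner M f g) \<le> cmod (L2_inner M f g)" by (rule complex_Re_le_cmod)
  then have "N2 M (\<lambda>x. f x + g x) \<le> N2 M f + N2 M g + 2 * (sqrt (N2 M f) * sqrt (N2 M g))"
    using N2_add[OF f g] cs by linarith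
  also have "\<dots> = (sqrt (N2 M f) + sqrt (N2 M g))\<^sup>2"
    using N2_nonneg[of M f] N2_nonneg[of M g] by (simp add: power2_sum)
  finally have "sqrt (N2 M (\<lambda>x. f x + g x)) \<le> sqrt ((sqrt (N2 M f) + sqrt (N2 M g))\<^sup>2)"
    by (rule real_sqrt_le_mono)
  then have "sqrt (N2 M (\<lambda>x. f x + g x)) \<le> sqrt (N2 M f) + sqrt (N2 M g)"
    using N2_nonneg[of M f] N2_nonneg[of M g] by simp
  then show ?thesis by (simp add: L2_norm_N2)
qed

lemma L2_norm_cmult: "L2_norm M (\<lambda>x. c * f x) = cmod c * L2_norm M f"
  by (simp add: L2_norm_N2 N2_cmult real_sqrt_mult)

lemma L2_norm_nonneg: "L2_norm M f \<ge> 0"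
  by (simp add: L2_norm_N2 N2_nonneg)

definition ONS :: "'a measure \<Rightarrow> nat set \<Rightarrow> (nat \<Rightarrow> 'a \<Rightarrow> complex) \<Rightarrow> bool" where
  "ONS M I w \<longleftrightarrow> (\<forall>\<xi>\<in>I. w \<xi> \<in> L2 M) \<and>
     (\<forall>\<xi>\<in>I. \<forall>\<eta>\<in>I. L2_inner M (w \<xi>) (w \<eta>) = (if \<xi> = \<eta> then 1 else 0))"

lemma N2_of_norm1: "L2_norm M f = 1 \<Longrightarrow> N2 M f = 1"
  by (simp add: L2_norm_N2)

lemma u_eq_v_AE:
  assumes "u \<in> L2 M" "v \<in> L2 M" "L2_norm M u = 1" "L2_norm M v = 1" "L2_inner M u v = 1"
  shows "AE x in M. u x = v x"
proof -
  have "N2 M (\<lambda>x. u x - v x) = 0"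
    using N2_diff[OF assms(1,2)] assms(3-5) by (simp add: N2_of_norm1)
  then have "AE x in M. u x - v x = 0" using N2_zero_AE L2_diff[OF assms(1,2)] by blast
  then show ?thesis by auto
qed

lemma ONS_uv:
  assumes u_L2: "\<forall>\<xi>\<in>I. u \<xi> \<in> L2 M" and v_L2: "\<forall>\<xi>\<in>I. v \<xi> \<in> L2 M"
    and u_norm: "\<forall>\<xi>\<in>I. L2_norm M (u \<xi>) = 1"
    and v_norm: "\<forall>\<xi>\<in>I. L2_norm M (v \<xi>) = 1"
    and biorth: "\<forall>\<xi>\<in>I. \<forall>\<eta>\<in>I. L2_inner M (u \<xi>) (v \<eta>) = (if \<xi> = \<eta> then 1 else 0)"
  shows "ONS M I u" "ONS M I v"
proof -
  have ae: "AE x in M. u \<xi> x = v \<xi> x" if "\<xi> \<in> I" for \<xi>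
    using u_eq_v_AE[of "u \<xi>" M "v \<xi>"] that assms by auto
  have ae': "AE x in M. v \<xi> x = u \<xi> x" if "\<xi> \<in> I" for \<xi>
    using ae[OF that] by auto
  show "ONS M I u" unfolding ONS_def
  proof (intro conjI ballI)
    fix \<xi> \<eta> assume h: "\<xi> \<in> I" "\<eta> \<in> I"
    have "L2_inner M (u \<xi>) (u \<eta>) = L2_inner M (u \<xi>) (v \<eta>)"
      by (rule inner_AE_right) (use h assms ae in auto)
    then show "L2_inner M (u \<xi>) (u \<eta>) = (if \<xi> = \<eta> then 1 else 0)" using biorth h by simp
  qed (use u_L2 in auto)
  show "ONS M I v" unfolding ONS_def
  proof (intro conjI ballI)
    fix \<xi> \<eta> assume h: "\<xi> \<in> I" "\<eta> \<in> I"
    have "L2_inner M (v \<eta>) (v \<xi>) = L2_inner M (v \<eta>) (u \<xi>)"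
      by (rule inner_AE_right) (use h assms ae' in auto)
    then have "L2_inner M (v \<xi>) (v \<eta>) = cnj (L2_inner M (v \<eta>) (u \<xi>))"
      by (metis inner_cnj)
    also have "\<dots> = L2_inner M (u \<xi>) (v \<eta>)" by (simp add: inner_cnj)
    finally show "L2_inner M (v \<xi>) (v \<eta>) = (if \<xi> = \<eta> then 1 else 0)" using biorth h by simp
  qed (use v_L2 in auto)
qed

lemma N2_ONS_sum:
  assumes "ONS M I w" "finite G" "G \<subseteq> I"
  shows "N2 M (\<lambda>x. \<Sum>\<xi>\<in>G. c \<xi> * w \<xi> x) = (\<Sum>\<xi>\<in>G. (cmod (c \<xi>))\<^sup>2)"
proof -
  have wL2: "\<And>i. i \<in> G \<Longrightarrow> w i \<in> L2 M" using assms unfolding ONS_def by auto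
  have SL2: "(\<lambda>x. \<Sum>\<xi>\<in>G. c \<xi> * w \<xi> x) \<in> L2 M" using wL2 by (rule L2_sum)
  have inn: "L2_inner M (w i) (\<lambda>x. \<Sum>\<xi>\<in>G. c \<xi> * w \<xi> x) = cnj (c i)" if "i \<in> G" for i
  proof -
    have "L2_inner M (w i) (\<lambda>x. \<Sum>\<xi>\<in>G. c \<xi> * w \<xi> x) = (\<Sum>j\<in>G. cnj (c j) * L2_inner M (w i) (w j))"
      by (rule inner_sum_right) (use wL2 that in auto)
    also have "\<dots> = (\<Sum>j\<in>G. (if i = j then cnj (c j) else 0))"
    proof (rule sum.cong)
    fix j assume "j \<in> G"
    then have "j \<in> I" "i \<in> I" using assms that by auto
    then show "cnj (c j) * L2_inner M (w i) (w j) = (if i = j then cnj (c j) else 0)"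
      using assms(1) unfolding ONS_def by auto
  qed simp
    also have "\<dots> = cnj (c i)" using assms(2) that by simp
    finally show ?thesis .
  qed
  have "complex_of_real (N2 M (\<lambda>x. \<Sum>\<xi>\<in>G. c \<xi> * w \<xi> x))
      = L2_inner M (\<lambda>x. \<Sum>\<xi>\<in>G. c \<xi> * w \<xi> x) (\<lambda>x. \<Sum>\<xi>\<in>G. c \<xi> * w \<xi> x)"
    by (simp add: inner_self)
  also have "\<dots> = (\<Sum>i\<in>G. c i * L2_inner M (w i) (\<lambda>x. \<Sum>\<xi>\<in>G. c \<xi> * w \<xi> x))"
    by (rule inner_sum_left) (use wL2 SL2 in auto)
  also have "\<dots> = (\<Sum>i\<in>G. c i * cnj (c i))"
    by (rule sum.cong) (use inn in auto)
  also have "\<dots> = complex_of_real (\<Sum>i\<in>G. (cmod (c i))\<^sup>2)"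
    by (simp only: of_real_sum complex_norm_square)
  finally show ?thesis by (simp only: of_real_eq_iff)
qed

lemma bessel:
  assumes "ONS M I w" "finite G" "G \<subseteq> I" "f \<in> L2 M"
  shows "(\<Sum>\<xi>\<in>G. (cmod (L2_inner M f (w \<xi>)))\<^sup>2) \<le> N2 M f"
proof -
  define c where "c \<xi> = L2_inner M f (w \<xi>)" for \<xi>
  have wL2: "\<And>i. i \<in> G \<Longrightarrow> w i \<in> L2 M" using assms unfolding ONS_def by auto
  have SL2: "(\<lambda>x. \<Sum>\<xi>\<in>G. c \<xi> * w \<xi> x) \<in> L2 M" using wL2 by (rule L2_sum)
  have "L2_inner M f (\<lambda>x. \<Sum>\<xi>\<in>G. c \<xi> * w \<xi> x) = (\<Sum>i\<in>G. cnj (c i) * L2_inner M f (w i))"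
    by (rule inner_sum_right) (use wL2 assms in auto)
  also have "\<dots> = (\<Sum>i\<in>G. c i * cnj (c i))"
    unfolding c_def by (rule sum.cong) (auto simp: mult.commute)
  also have "\<dots> = complex_of_real (\<Sum>i\<in>G. (cmod (c i))\<^sup>2)"
    by (simp only: of_real_sum complex_norm_square)
  finally have i1: "Re (L2_inner M f (\<lambda>x. \<Sum>\<xi>\<in>G. c \<xi> * w \<xi> x)) = (\<Sum>i\<in>G. (cmod (c i))\<^sup>2)"
    by simp
  have "0 \<le> N2 M (\<lambda>x. f x - (\<Sum>\<xi>\<in>G. c \<xi> * w \<xi> x))" by (rule N2_nonneg)
  also have "\<dots> = N2 M f - (\<Sum>i\<in>G. (cmod (c i))\<^sup>2)"
    using N2_diff[OF assms(4) SL2] i1 N2_ONS_sum[OF assms(1-3)] by simp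
  finally show ?thesis unfolding c_def by simp
qed

definition KF :: "'a measure \<Rightarrow> (nat \<Rightarrow> 'a \<Rightarrow> complex) \<Rightarrow> (nat \<Rightarrow> 'a \<Rightarrow> complex) \<Rightarrow> (nat \<Rightarrow> complex)
   \<Rightarrow> nat set \<Rightarrow> ('a \<Rightarrow> complex) \<Rightarrow> 'a \<Rightarrow> complex" where
  "KF M u v \<sigma> F f = (\<lambda>x. \<Sum>\<xi>\<in>F. \<sigma> \<xi> * L_fourier M v f \<xi> * u \<xi> x)"

lemma KF_L2:
  assumes "ONS M I u" "F \<subseteq> I"
  shows "KF M u v \<sigma> F f \<in> L2 M"
  unfolding KF_def by (rule L2_sum) (use assms in \<open>auto simp: ONS_def\<close>)

lemma limit_le:
  fixes a c :: real
  assumes "e \<longlonglongrightarrow> 0" "\<And>n. n \<ge> N0 \<Longrightarrow> a \<le> e n + c"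
  shows "a \<le> c"
proof (rule ccontr)
  assume "\<not> a \<le> c"
  then have "a - c > 0" by simp
  then have "eventually (\<lambda>n. e n < a - c) sequentially"
    using order_tendstoD(2)[OF assms(1)] by blast
  then obtain N where "\<And>n. n \<ge> N \<Longrightarrow> e n < a - c" by (auto simp: eventually_sequentially)
  then have "e (max N N0) < a - c" by simp
  moreover have "a \<le> e (max N N0) + c" using assms(2) by simp
  ultimately show False by simp
qed

lemma tail_estimate:
  assumes ONu: "ONS M I u" and ONv: "ONS M I v"
    and T: "is_L_multiplier M I u v \<sigma> T"
    and F: "finite F" "F \<subseteq> I"
    and t: "t \<ge> 0" "\<And>\<xi>. \<xi> \<in> I - F \<Longrightarrow> cmod (\<sigma> \<xi>) \<le> t"
    and f: "f \<in> L2 M"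
  shows "L2_norm M (\<lambda>x. T f x - KF M u v \<sigma> F f x) \<le> t * L2_norm M f"
proof -
  define P where "P n = partial_series I (\<lambda>\<xi> y. \<sigma> \<xi> * L_fourier M v f \<xi> * u \<xi> y) n" for n
  define e where "e n = L2_norm M (\<lambda>x. T f x - P n x)" for n
  have e0: "e \<longlonglongrightarrow> 0" using T f unfolding is_L_multiplier_def e_def P_def by blast
  have TfL2: "T f \<in> L2 M" using T f unfolding is_L_multiplier_def by blast
  have uL2: "\<And>\<xi>. \<xi> \<in> I \<Longrightarrow> u \<xi> \<in> L2 M" using ONu unfolding ONS_def by auto
  have PL2: "P n \<in> L2 M" for n
    unfolding P_def partial_series_def by (rule L2_sum) (use uL2 in auto)
  have KL2: "KF M u v \<sigma> F f \<in> L2 M" using KF_L2[OF ONu F(2)] .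
  obtain N0 where N0: "\<And>\<xi>. \<xi> \<in> F \<Longrightarrow> \<xi> < N0"
    using F(1) finite_nat_bounded by blast
  have main: "L2_norm M (\<lambda>x. T f x - KF M u v \<sigma> F f x) \<le> e n + t * L2_norm M f" if n: "n \<ge> N0" for n
  proof -
    define G where "G = I \<inter> {..<n} - F"
    have FG: "F \<subseteq> I \<inter> {..<n}" using F N0 n by fastforce
    have Gfin: "finite G" "G \<subseteq> I" unfolding G_def by auto
    have diff: "P n x - KF M u v \<sigma> F f x = (\<Sum>\<xi>\<in>G. (\<sigma> \<xi> * L_fourier M v f \<xi>) * u \<xi> x)" for x
      unfolding P_def partial_series_def KF_def G_def
      using sum.subset_diff[OF FG, of "\<lambda>\<xi>. \<sigma> \<xi> * L_fourier M v f \<xi> * u \<xi> x"] by simp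
    have "N2 M (\<lambda>x. P n x - KF M u v \<sigma> F f x) = (\<Sum>\<xi>\<in>G. (cmod (\<sigma> \<xi> * L_fourier M v f \<xi>))\<^sup>2)"
      unfolding diff by (rule N2_ONS_sum[OF ONu Gfin])
    also have "\<dots> \<le> (\<Sum>\<xi>\<in>G. t\<^sup>2 * (cmod (L2_inner M f (v \<xi>)))\<^sup>2)"
    proof (rule sum_mono)
      fix \<xi> assume "\<xi> \<in> G"
      then have "cmod (\<sigma> \<xi>) \<le> t" using t G_def by auto
      then have "(cmod (\<sigma> \<xi>))\<^sup>2 \<le> t\<^sup>2" by (intro power_mono) auto
      then show "(cmod (\<sigma> \<xi> * L_fourier M v f \<xi>))\<^sup>2 \<le> t\<^sup>2 * (cmod (L2_inner M f (v \<xi>)))\<^sup>2"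
        by (simp add: norm_mult power_mult_distrib L_fourier_def mult_right_mono)
    qed
    also have "\<dots> = t\<^sup>2 * (\<Sum>\<xi>\<in>G. (cmod (L2_inner M f (v \<xi>)))\<^sup>2)"
      by (simp add: sum_distrib_left)
    also have "\<dots> \<le> t\<^sup>2 * N2 M f"
      by (rule mult_left_mono[OF bessel[OF ONv Gfin f]]) simp
    finally have "sqrt (N2 M (\<lambda>x. P n x - KF M u v \<sigma> F f x)) \<le> sqrt (t\<^sup>2 * N2 M f)"
      by (rule real_sqrt_le_mono)
    then have b2: "L2_norm M (\<lambda>x. P n x - KF M u v \<sigma> F f x) \<le> t * L2_norm M f"
      using t(1) by (simp add: L2_norm_N2 real_sqrt_mult)
    have "L2_norm M (\<lambda>x. T f x - KF M u v \<sigma> F f x)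
        = L2_norm M (\<lambda>x. (T f x - P n x) + (P n x - KF M u v \<sigma> F f x))" by simp
    also have "\<dots> \<le> L2_norm M (\<lambda>x. T f x - P n x) + L2_norm M (\<lambda>x. P n x - KF M u v \<sigma> F f x)"
      by (rule L2_norm_triangle) (use L2_diff TfL2 PL2 KL2 in auto)
    also have "\<dots> \<le> e n + t * L2_norm M f" using b2 unfolding e_def by simp
    finally show ?thesis .
  qed
  show ?thesis by (rule limit_le[OF e0 main])
qed

lemma fourier_lin:
  assumes "v \<xi> \<in> L2 M" "f \<in> L2 M" "g \<in> L2 M"
  shows "L_fourier M v (\<lambda>y. a * f y + g y) \<xi> = a * L_fourier M v f \<xi> + L_fourier M v g \<xi>"
  unfolding L_fourier_def
  using inner_add_left[OF L2_cmult[OF assms(2)] assms(3) assms(1)] by (simp add: inner_cmult_left)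

lemma L2_norm_zero: "L2_norm M (\<lambda>x. 0) = 0"
  by (simp add: L2_norm_N2 N2_def)

lemma partial_lin:
  assumes ONv: "ONS M I v" and f: "f \<in> L2 M" and g: "g \<in> L2 M"
  shows "partial_series I (\<lambda>\<xi> y. \<sigma> \<xi> * L_fourier M v (\<lambda>y. a * f y + g y) \<xi> * u \<xi> y) n x
     = a * partial_series I (\<lambda>\<xi> y. \<sigma> \<xi> * L_fourier M v f \<xi> * u \<xi> y) n x
       + partial_series I (\<lambda>\<xi> y. \<sigma> \<xi> * L_fourier M v g \<xi> * u \<xi> y) n x"
proof -
  have "partial_series I (\<lambda>\<xi> y. \<sigma> \<xi> * L_fourier M v (\<lambda>y. a * f y + g y) \<xi> * u \<xi> y) n x
     = (\<Sum>\<xi>\<in>I \<inter> {..<n}. a * (\<sigma> \<xi> * L_fourier M v f \<xi> * u \<xi> x) + \<sigma> \<xi> * L_fourier M v g \<xi> * u \<xi> x)"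
    unfolding partial_series_def
  proof (rule sum.cong)
    fix \<xi> assume "\<xi> \<in> I \<inter> {..<n}"
    then have "v \<xi> \<in> L2 M" using ONv unfolding ONS_def by auto
    then show "\<sigma> \<xi> * L_fourier M v (\<lambda>y. a * f y + g y) \<xi> * u \<xi> x =
        a * (\<sigma> \<xi> * L_fourier M v f \<xi> * u \<xi> x) + \<sigma> \<xi> * L_fourier M v g \<xi> * u \<xi> x"
    proof -
      have fl: "L_fourier M v (\<lambda>y. a * f y + g y) \<xi> = a * L_fourier M v f \<xi> + L_fourier M v g \<xi>"
        by (rule fourier_lin) (use \<open>v \<xi> \<in> L2 M\<close> f g in auto)
      show ?thesis by (simp only: fl) (simp add: algebra_simps)
    qed
  qed simp
  also have "\<dots> = a * partial_series I (\<lambda>\<xi> y. \<sigma> \<xi> * L_fourier M v f \<xi> * u \<xi> y) n x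
       + partial_series I (\<lambda>\<xi> y. \<sigma> \<xi> * L_fourier M v g \<xi> * u \<xi> y) n x"
    unfolding partial_series_def by (simp add: sum.distrib sum_distrib_left)
  finally show ?thesis .
qed

lemma T_linear:
  assumes ONu: "ONS M I u" and ONv: "ONS M I v"
    and T: "is_L_multiplier M I u v \<sigma> T"
  shows "L2_linear M T"
  unfolding L2_linear_def
proof (intro conjI ballI allI)
  fix f assume "f \<in> L2 M" then show "T f \<in> L2 M" using T unfolding is_L_multiplier_def by blast
next
  fix f g a assume f: "f \<in> L2 M" and g: "g \<in> L2 M"
  define h where "h = (\<lambda>y. a * f y + g y)"
  have h: "h \<in> L2 M" unfolding h_def using f g by (intro L2_add L2_cmult)
  define P where "P k n = partial_series I (\<lambda>\<xi> y. \<sigma> \<xi> * L_fourier M v k \<xi> * u \<xi> y) n" for k n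
  define e where "e k n = L2_norm M (\<lambda>x. T k x - P k n x)" for k n
  have e0: "e k \<longlonglongrightarrow> 0" if "k \<in> L2 M" for k
    using T that unfolding is_L_multiplier_def e_def P_def by blast
  have TL2: "T k \<in> L2 M" if "k \<in> L2 M" for k using T that unfolding is_L_multiplier_def by blast
  have uL2: "\<And>\<xi>. \<xi> \<in> I \<Longrightarrow> u \<xi> \<in> L2 M" using ONu unfolding ONS_def by auto
  have PL2: "P k n \<in> L2 M" for k n
    unfolding P_def partial_series_def by (rule L2_sum) (use uL2 in auto)
  have Pl: "P h n x = a * P f n x + P g n x" for n x
    unfolding P_def h_def by (rule partial_lin[OF ONv f g])
  let ?D = "\<lambda>x. T h x - (a * T f x + T g x)"
  have bound: "L2_norm M ?D \<le> (e h n + cmod a * e f n + e g n) + 0" for n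
  proof -
    have A: "(\<lambda>x. T h x - P h n x) \<in> L2 M" using TL2[OF h] PL2 by (rule L2_diff)
    have B: "(\<lambda>x. (- a) * (T f x - P f n x)) \<in> L2 M" using TL2[OF f] PL2 by (intro L2_cmult L2_diff)
    have C: "(\<lambda>x. (- 1) * (T g x - P g n x)) \<in> L2 M" using TL2[OF g] PL2 by (intro L2_cmult L2_diff)
    have eq: "?D = (\<lambda>x. (T h x - P h n x) + ((- a) * (T f x - P f n x) + (- 1) * (T g x - P g n x)))"
      by (rule ext) (simp add: Pl algebra_simps)
    have "L2_norm M ?D \<le> L2_norm M (\<lambda>x. T h x - P h n x)
        + L2_norm M (\<lambda>x. (- a) * (T f x - P f n x) + (- 1) * (T g x - P g n x))"
      unfolding eq by (rule L2_norm_triangle[OF A L2_add[OF B C]])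
    also have "L2_norm M (\<lambda>x. (- a) * (T f x - P f n x) + (- 1) * (T g x - P g n x))
        \<le> L2_norm M (\<lambda>x. (- a) * (T f x - P f n x)) + L2_norm M (\<lambda>x. (- 1) * (T g x - P g n x))"
      by (rule L2_norm_triangle[OF B C])
    also have "L2_norm M (\<lambda>x. (- a) * (T f x - P f n x)) = cmod a * e f n"
      unfolding e_def by (simp only: L2_norm_cmult norm_minus_cancel)
    also have "L2_norm M (\<lambda>x. (- 1) * (T g x - P g n x)) = e g n"
      unfolding e_def by (simp only: L2_norm_cmult norm_minus_cancel norm_one mult_1)
    finally show ?thesis unfolding e_def by simp
  qed
  have lim: "(\<lambda>n. e h n + cmod a * e f n + e g n) \<longlonglongrightarrow> 0"
    using tendsto_add[OF tendsto_add[OF e0[OF h] tendsto_mult_right_zero[OF e0[OF f]]] e0[OF g]]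
    by simp
  have "L2_norm M ?D \<le> 0" by (rule limit_le[OF lim bound])
  moreover have "L2_norm M ?D \<ge> 0" by (rule L2_norm_nonneg)
  ultimately show "L2_norm M (\<lambda>x. T (\<lambda>y. a * f y + g y) x - (a * T f x + T g x)) = 0"
    unfolding h_def by simp
qed

lemma KF_linear:
  assumes ONu: "ONS M I u" and ONv: "ONS M I v" and F: "F \<subseteq> I"
  shows "L2_linear M (KF M u v \<sigma> F)"
  unfolding L2_linear_def
proof (intro conjI ballI allI)
  fix f assume "f \<in> L2 M" then show "KF M u v \<sigma> F f \<in> L2 M" using KF_L2[OF ONu F] by blast
next
  fix f g a assume f: "f \<in> L2 M" and g: "g \<in> L2 M"
  have "(\<lambda>x. KF M u v \<sigma> F (\<lambda>y. a * f y + g y) x - (a * KF M u v \<sigma> F f x + KF M u v \<sigma> F g x)) = (\<lambda>x. 0)"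
  proof (rule ext)
    fix x
    have "KF M u v \<sigma> F (\<lambda>y. a * f y + g y) x
        = (\<Sum>\<xi>\<in>F. a * (\<sigma> \<xi> * L_fourier M v f \<xi> * u \<xi> x) + \<sigma> \<xi> * L_fourier M v g \<xi> * u \<xi> x)"
      unfolding KF_def
    proof (rule sum.cong)
      fix \<xi> assume "\<xi> \<in> F"
      then have "v \<xi> \<in> L2 M" using ONv F unfolding ONS_def by auto
      then show "\<sigma> \<xi> * L_fourier M v (\<lambda>y. a * f y + g y) \<xi> * u \<xi> x =
          a * (\<sigma> \<xi> * L_fourier M v f \<xi> * u \<xi> x) + \<sigma> \<xi> * L_fourier M v g \<xi> * u \<xi> x"
      proof -
      have fl: "L_fourier M v (\<lambda>y. a * f y + g y) \<xi> = a * L_fourier M v f \<xi> + L_fourier M v g \<xi>"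
        by (rule fourier_lin) (use \<open>v \<xi> \<in> L2 M\<close> f g in auto)
      show ?thesis by (simp only: fl) (simp add: algebra_simps)
    qed
    qed simp
    also have "\<dots> = a * KF M u v \<sigma> F f x + KF M u v \<sigma> F g x"
      unfolding KF_def by (simp add: sum.distrib sum_distrib_left)
    finally show "KF M u v \<sigma> F (\<lambda>y. a * f y + g y) x - (a * KF M u v \<sigma> F f x + KF M u v \<sigma> F g x) = 0"
      by simp
  qed
  then show "L2_norm M (\<lambda>x. KF M u v \<sigma> F (\<lambda>y. a * f y + g y) x - (a * KF M u v \<sigma> F f x + KF M u v \<sigma> F g x)) = 0"
    by (simp add: L2_norm_zero)
qed

lemma KF_rank:
  assumes ONu: "ONS M I u" and ONv: "ONS M I v" and F: "finite F" "F \<subseteq> I" and n: "card F \<le> n"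
  shows "L2_rank_le M n (KF M u v \<sigma> F)"
  unfolding L2_rank_le_def
proof (intro conjI)
  show "L2_linear M (KF M u v \<sigma> F)" by (rule KF_linear[OF ONu ONv F(2)])
  obtain h where h: "bij_betw h {0..<card F} F" using ex_bij_betw_nat_finite[OF F(1)] by blast
  define g where "g j = (if j < card F then u (h j) else (\<lambda>x. 0))" for j
  have hF: "j < card F \<Longrightarrow> h j \<in> F" for j using h by (auto simp: bij_betw_def)
  show "\<exists>g. (\<forall>j<n. g j \<in> L2 M) \<and> (\<forall>f\<in>L2 M. \<exists>c. L2_norm M (\<lambda>x. KF M u v \<sigma> F f x - (\<Sum>j<n. c j * g j x)) = 0)"
  proof (rule exI[of _ g], intro conjI allI impI ballI)
    fix j assume "j < n"
    show "g j \<in> L2 M" unfolding g_def using hF F ONu L2_zero by (auto simp: ONS_def)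
  next
    fix f assume f: "f \<in> L2 M"
    define c where "c j = (if j < card F then \<sigma> (h j) * L_fourier M v f (h j) else 0)" for j
    have "(\<Sum>j<n. c j * g j x) = KF M u v \<sigma> F f x" for x
    proof -
      have "(\<Sum>j<n. c j * g j x) = (\<Sum>j\<in>{0..<card F}. c j * g j x)"
        by (rule sum.mono_neutral_right) (use n in \<open>auto simp: c_def\<close>)
      also have "\<dots> = (\<Sum>j\<in>{0..<card F}. \<sigma> (h j) * L_fourier M v f (h j) * u (h j) x)"
        by (rule sum.cong) (auto simp: c_def g_def)
      also have "\<dots> = (\<Sum>\<xi>\<in>F. \<sigma> \<xi> * L_fourier M v f \<xi> * u \<xi> x)"
        by (rule sum.reindex_bij_betw[OF h])
      finally show ?thesis unfolding KF_def by simp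
    qed
    then show "\<exists>c. L2_norm M (\<lambda>x. KF M u v \<sigma> F f x - (\<Sum>j<n. c j * g j x)) = 0"
      by (intro exI[of _ c]) (simp add: L2_norm_zero)
  qed
qed

lemma sv_le:
  assumes "L2_rank_le M n K" "\<forall>f\<in>L2 M. L2_norm M (\<lambda>x. T f x - K f x) \<le> t * L2_norm M f" "t \<ge> 0"
  shows "singular_value M T n \<le> t"
  unfolding singular_value_def
  by (rule cInf_lower) (use assms in \<open>auto intro: bdd_belowI[where m=0]\<close>)

lemma sv_nonneg:
  assumes "L2_rank_le M n K" "\<forall>f\<in>L2 M. L2_norm M (\<lambda>x. T f x - K f x) \<le> t * L2_norm M f" "t \<ge> 0"
  shows "singular_value M T n \<ge> 0"
  unfolding singular_value_def
  by (rule cInf_greatest) (use assms in auto)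

lemma sv_F:
  assumes ONu: "ONS M I u" and ONv: "ONS M I v" and T: "is_L_multiplier M I u v \<sigma> T"
    and F: "finite F" "F \<subseteq> I" "card F \<le> n"
    and t: "t \<ge> 0" "\<And>\<xi>. \<xi> \<in> I - F \<Longrightarrow> cmod (\<sigma> \<xi>) \<le> t"
  shows "singular_value M T n \<le> t" "singular_value M T n \<ge> 0"
proof -
  have R: "L2_rank_le M n (KF M u v \<sigma> F)" by (rule KF_rank[OF ONu ONv F])
  have B: "\<forall>f\<in>L2 M. L2_norm M (\<lambda>x. T f x - KF M u v \<sigma> F f x) \<le> t * L2_norm M f"
    using tail_estimate[OF ONu ONv T F(1,2) t] by blast
  show "singular_value M T n \<le> t" by (rule sv_le[OF R B t(1)])
  show "singular_value M T n \<ge> 0" by (rule sv_nonneg[OF R B t(1)])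
qed

lemma markov_card:
  fixes g :: "nat \<Rightarrow> real"
  assumes "g summable_on I" "\<And>\<xi>. \<xi> \<in> I \<Longrightarrow> 0 \<le> g \<xi>" "finite A" "A \<subseteq> I" "\<And>\<xi>. \<xi> \<in> A \<Longrightarrow> c \<le> g \<xi>"
  shows "real (card A) * c \<le> infsum g I"
proof -
  have "real (card A) * c = (\<Sum>\<xi>\<in>A. c)" by simp
  also have "\<dots> \<le> (\<Sum>\<xi>\<in>A. g \<xi>)" by (rule sum_mono) (use assms in auto)
  also have "\<dots> \<le> infsum g I" by (rule finite_sum_le_infsum) (use assms in auto)
  finally show ?thesis .
qed

lemma markov_finite:
  fixes g :: "nat \<Rightarrow> real"
  assumes "g summable_on I" "\<And>\<xi>. \<xi> \<in> I \<Longrightarrow> 0 \<le> g \<xi>" "c > 0"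
  shows "finite {\<xi>\<in>I. c \<le> g \<xi>}"
proof (rule ccontr)
  assume "infinite {\<xi>\<in>I. c \<le> g \<xi>}"
  define k where "k = nat (ceiling (infsum g I / c)) + 1"
  obtain B where B: "finite B" "card B = k" "B \<subseteq> {\<xi>\<in>I. c \<le> g \<xi>}"
    using infinite_arbitrarily_large[OF \<open>infinite _\<close>] by blast
  have "real k * c \<le> infsum g I"
    using markov_card[OF assms(1,2) B(1), of c] B by auto
  moreover have "real k > infsum g I / c"
    unfolding k_def by linarith
  ultimately show False using assms(3) by (simp add: divide_less_eq)
qed

theorem corollary3p9:
  fixes M :: "'a measure"
    and I :: "nat set"
    and m :: real
    and Lop Lstar :: "('a \<Rightarrow> complex) \<Rightarrow> ('a \<Rightarrow> complex)"
    and lam :: "nat \<Rightarrow> complex"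
    and u v :: "nat \<Rightarrow> 'a \<Rightarrow> complex"
    and s0 r s :: real
    and T :: "('a \<Rightarrow> complex) \<Rightarrow> ('a \<Rightarrow> complex)"
  assumes m_pos: "m > 0"
    and u_L2: "\<forall>\<xi>\<in>I. u \<xi> \<in> L2 M" and v_L2: "\<forall>\<xi>\<in>I. v \<xi> \<in> L2 M"
    and eig_u: "\<forall>\<xi>\<in>I. AE x in M. Lop (u \<xi>) x = lam \<xi> * u \<xi> x"
    and eig_v: "\<forall>\<xi>\<in>I. AE x in M. Lstar (v \<xi>) x = cnj (lam \<xi>) * v \<xi> x"
    and u_norm: "\<forall>\<xi>\<in>I. L2_norm M (u \<xi>) = 1"
    and v_norm: "\<forall>\<xi>\<in>I. L2_norm M (v \<xi>) = 1"
    and biorth: "\<forall>\<xi>\<in>I. \<forall>\<eta>\<in>I. L2_inner M (u \<xi>) (v \<eta>) = (if \<xi> = \<eta> then 1 else 0)"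
    and basis: "is_L2_basis M I u"
    and s0_summable: "(\<lambda>\<xi>. japanese_bracket m (lam \<xi>) powr (- s0)) summable_on I"
    and positive: "\<forall>\<xi>\<in>I. lam \<xi> \<in> \<real> \<and> Re (lam \<xi>) \<le> 0"
    and r_pos: "0 < r" and r_le1: "r \<le> 1"
    and s_gt: "s > s0 / r"
    and T_def: "is_L_multiplier M I u v (\<lambda>\<xi>. (1 - lam \<xi>) powr (complex_of_real (- s / m))) T"
  shows "schatten_class M r T"
proof -
  have ONu: "ONS M I u" and ONv: "ONS M I v"
    using ONS_uv[OF u_L2 v_L2 u_norm v_norm biorth] by auto
  define \<sigma> where "\<sigma> = (\<lambda>\<xi>. (1 - lam \<xi>) powr (complex_of_real (- s / m)))"
  have T: "is_L_multiplier M I u v \<sigma> T" using T_def unfolding \<sigma>_def .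
  define \<rho> where "\<rho> \<xi> = 1 - Re (lam \<xi>)" for \<xi>
  have \<rho>1: "\<rho> \<xi> \<ge> 1" if "\<xi> \<in> I" for \<xi> using positive that unfolding \<rho>_def by auto
  have lamr: "lam \<xi> = complex_of_real (Re (lam \<xi>))" if "\<xi> \<in> I" for \<xi>
    using positive that by (simp add: complex_is_Real_iff complex_eq_iff)
  have sig: "cmod (\<sigma> \<xi>) = \<rho> \<xi> powr (- s / m)" if "\<xi> \<in> I" for \<xi>
  proof -
    have e: "1 - lam \<xi> = complex_of_real (\<rho> \<xi>)"
      using lamr[OF that] unfolding \<rho>_def by (metis of_real_1 of_real_diff)
    have "\<sigma> \<xi> = complex_of_real (\<rho> \<xi> powr (- s / m))"
      unfolding \<sigma>_def e by (rule powr_of_real) (use \<rho>1[OF that] in auto)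
    then show ?thesis by simp
  qed
  have cl: "cmod (lam \<xi>) = \<rho> \<xi> - 1" if "\<xi> \<in> I" for \<xi>
  proof -
    have "cmod (lam \<xi>) = \<bar>Re (lam \<xi>)\<bar>" using lamr[OF that] by (metis norm_of_real)
    then show ?thesis using positive that unfolding \<rho>_def by auto
  qed
  define g where "g \<xi> = japanese_bracket m (lam \<xi>) powr (- s0)" for \<xi>
  have gsum: "g summable_on I" using s0_summable unfolding g_def .
  have gnn: "g \<xi> \<ge> 0" for \<xi> unfolding g_def by simp
  have br: "japanese_bracket m (lam \<xi>) = (1 + (\<rho> \<xi> - 1)\<^sup>2) powr (1 / (2 * m))" if "\<xi> \<in> I" for \<xi>
    unfolding japanese_bracket_def using cl[OF that] by simp
  have lin: "L2_linear M T" by (rule T_linear[OF ONu ONv T])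
  have KF0: "KF M u v \<sigma> {} f = (\<lambda>x. 0)" for f unfolding KF_def by simp
  have bounded_of: "L2_bounded M T" if t0: "t0 \<ge> 0" "\<And>\<xi>. \<xi> \<in> I \<Longrightarrow> cmod (\<sigma> \<xi>) \<le> t0" for t0
    unfolding L2_bounded_def
  proof (intro conjI lin exI[of _ t0] ballI)
    fix f assume f: "f \<in> L2 M"
    show "L2_norm M (T f) \<le> t0 * L2_norm M f"
      using tail_estimate[OF ONu ONv T finite.emptyI empty_subsetI t0(1) _ f] t0(2)
      by (simp add: KF0)
  qed
  show ?thesis
  proof (cases "s0 \<le> 0")
    case True
    have g1: "1 \<le> g \<xi>" if "\<xi> \<in> I" for \<xi>
    proof -
      have "1 \<le> 1 + (\<rho> \<xi> - 1)\<^sup>2" by simp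
      then have "1 \<le> japanese_bracket m (lam \<xi>)"
        unfolding br[OF that] using m_pos by (intro ge_one_powr_ge_zero) auto
      then show ?thesis unfolding g_def using True by (intro ge_one_powr_ge_zero) auto
    qed
    have "finite {\<xi>\<in>I. 1 \<le> g \<xi>}" by (rule markov_finite[OF gsum]) (use gnn in auto)
    moreover have "{\<xi>\<in>I. 1 \<le> g \<xi>} = I" using g1 by auto
    ultimately have Ifin: "finite I" by simp
    define t0 where "t0 = (\<Sum>\<xi>\<in>I. cmod (\<sigma> \<xi>))"
    have t0: "t0 \<ge> 0" "\<And>\<xi>. \<xi> \<in> I \<Longrightarrow> cmod (\<sigma> \<xi>) \<le> t0"
      unfolding t0_def using Ifin by (auto intro: sum_nonneg member_le_sum)
    have bd: "L2_bounded M T" by (rule bounded_of[OF t0])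
    have sv0: "singular_value M T n = 0" if "n \<ge> card I" for n
    proof -
      have "singular_value M T n \<le> 0"
        by (rule sv_F(1)[OF ONu ONv T Ifin subset_refl that]) auto
      moreover have "singular_value M T n \<ge> 0"
        by (rule sv_F(2)[OF ONu ONv T Ifin subset_refl that]) auto
      ultimately show ?thesis by simp
    qed
    have "(\<lambda>n. singular_value M T n powr r) sums (\<Sum>n\<in>{..<card I}. singular_value M T n powr r)"
      by (rule sums_finite) (auto simp: sv0)
    then have "summable (\<lambda>n. singular_value M T n powr r)" by (rule sums_summable)
    then show ?thesis unfolding schatten_class_def using bd by simp
  next
    case False
    then have s0pos: "s0 > 0" by simp
    have spos: "s > 0" using s_gt divide_pos_pos[OF s0pos r_pos] by linarith
    define r' where "r' = s0 / s"
    have r'pos: "r' > 0" unfolding r'_def using s0pos spos by simp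
    have r'r: "r' < r"
    proof -
      have "s0 < s * r" using s_gt r_pos by (simp add: divide_less_eq mult.commute)
      then show ?thesis unfolding r'_def using spos by (simp add: divide_less_eq mult.commute)
    qed
    have sig1: "cmod (\<sigma> \<xi>) \<le> 1" if "\<xi> \<in> I" for \<xi>
    proof -
      have "\<rho> \<xi> powr (- s / m) \<le> \<rho> \<xi> powr 0"
        by (rule powr_mono) (use \<rho>1[OF that] spos m_pos in auto)
      then show ?thesis using sig[OF that] \<rho>1[OF that] by simp
    qed
    have key: "cmod (\<sigma> \<xi>) powr r' \<le> g \<xi>" if "\<xi> \<in> I" for \<xi>
    proof -
      have r1: "\<rho> \<xi> \<ge> 1" using \<rho>1[OF that] .
      have "cmod (\<sigma> \<xi>) powr r' = \<rho> \<xi> powr (- s / m * r')"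
        using sig[OF that] by (simp add: powr_powr)
      also have "- s / m * r' = 2 * (- s0 / (2 * m))"
        unfolding r'_def using spos m_pos by (simp add: field_simps)
      also have "\<rho> \<xi> powr (2 * (- s0 / (2 * m))) = (\<rho> \<xi> powr 2) powr (- s0 / (2 * m))"
        by (simp add: powr_powr)
      also have "\<rho> \<xi> powr 2 = (\<rho> \<xi>)\<^sup>2" using r1 by (simp add: powr_numeral)
      also have "((\<rho> \<xi>)\<^sup>2) powr (- s0 / (2 * m)) \<le> (1 + (\<rho> \<xi> - 1)\<^sup>2) powr (- s0 / (2 * m))"
      proof (rule powr_mono2')
        show "- s0 / (2 * m) \<le> 0" using s0pos m_pos by simp
        show "0 < 1 + (\<rho> \<xi> - 1)\<^sup>2" by (simp add: add_pos_nonneg)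
        show "1 + (\<rho> \<xi> - 1)\<^sup>2 \<le> (\<rho> \<xi>)\<^sup>2" using r1 by (simp add: power2_diff)
      qed
      also have "\<dots> = g \<xi>"
        unfolding g_def br[OF that] by (simp add: powr_powr)
      finally show ?thesis .
    qed
    define S where "S = infsum g I"
    have Snn: "S \<ge> 0" unfolding S_def by (rule infsum_nonneg) (use gnn in auto)
    have count: "finite {\<xi>\<in>I. t < cmod (\<sigma> \<xi>)} \<and> real (card {\<xi>\<in>I. t < cmod (\<sigma> \<xi>)}) * t powr r' \<le> S"
      if tpos: "t > 0" for t
    proof -
      have sub: "{\<xi>\<in>I. t < cmod (\<sigma> \<xi>)} \<subseteq> {\<xi>\<in>I. t powr r' \<le> g \<xi>}"
      proof safe
        fix \<xi> assume "\<xi> \<in> I" "t < cmod (\<sigma> \<xi>)"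
        then have "t powr r' < cmod (\<sigma> \<xi>) powr r'"
          using r'pos tpos by (intro powr_less_mono2) auto
        then show "t powr r' \<le> g \<xi>" using key[OF \<open>\<xi> \<in> I\<close>] by simp
      qed
      have fin: "finite {\<xi>\<in>I. t powr r' \<le> g \<xi>}"
        by (rule markov_finite[OF gsum]) (use gnn tpos in auto)
      have f2: "finite {\<xi>\<in>I. t < cmod (\<sigma> \<xi>)}" using finite_subset[OF sub fin] .
      have "real (card {\<xi>\<in>I. t < cmod (\<sigma> \<xi>)}) * t powr r' \<le> S"
        unfolding S_def by (rule markov_card[OF gsum _ f2]) (use sub gnn in auto)
      then show ?thesis using f2 by simp
    qed
    have bd: "L2_bounded M T" by (rule bounded_of[of 1]) (use sig1 in auto)
    have svnn: "singular_value M T n \<ge> 0" for n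
      by (rule sv_F(2)[OF ONu ONv T finite.emptyI empty_subsetI _ _ sig1]) auto
    define tn where "tn n = ((S + 1) / real n) powr (1 / r')" for n
    have svle: "singular_value M T n \<le> tn n" if n1: "n \<ge> 1" for n
    proof -
      have npos: "real n > 0" using n1 by simp
      have tpos: "tn n > 0" unfolding tn_def using Snn npos by simp
      define A where "A = {\<xi>\<in>I. tn n < cmod (\<sigma> \<xi>)}"
      have cA: "finite A" "real (card A) * tn n powr r' \<le> S"
        using count[OF tpos] unfolding A_def by auto
      have "tn n powr r' = (S + 1) / real n"
        unfolding tn_def using r'pos Snn npos by (simp add: powr_powr)
      then have "real (card A) * ((S + 1) / real n) \<le> S" using cA(2) by simp
      then have "real (card A) * (S + 1) \<le> S * real n" using npos by (simp add: field_simps)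
      moreover have "S * real n \<le> real n * (S + 1)" using npos by (simp add: algebra_simps)
      ultimately have "real (card A) * (S + 1) \<le> real n * (S + 1)" by linarith
      then have "real (card A) \<le> real n"
        using Snn by (simp add: mult_le_cancel_right_pos)
      then have cn: "card A \<le> n" by simp
      show ?thesis
        by (rule sv_F(1)[OF ONu ONv T cA(1) _ cn]) (use tpos in \<open>auto simp: A_def\<close>)
    qed
    define p where "p = r / r'"
    have p1: "p > 1" unfolding p_def using r'r r'pos by simp
    have summ: "summable (\<lambda>n. (S + 1) powr p * real n powr (- p))"
      by (rule summable_mult) (use p1 summable_real_powr_iff in auto)
    have "summable (\<lambda>n. singular_value M T n powr r)"
    proof (rule summable_comparison_test'[OF summ, of 1])
      fix n :: nat assume n1: "1 \<le> n"
      have "norm (singular_value M T n powr r) = singular_value M T n powr r" by simp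
      also have "\<dots> \<le> tn n powr r"
        by (rule powr_mono2) (use r_pos svnn svle[OF n1] in auto)
      also have "\<dots> = ((S + 1) / real n) powr p"
        unfolding tn_def p_def by (simp add: powr_powr)
      also have "\<dots> = (S + 1) powr p * real n powr (- p)"
        using Snn n1 by (subst powr_divide) (simp_all add: powr_minus divide_inverse)
      finally show "norm (singular_value M T n powr r) \<le> (S + 1) powr p * real n powr (- p)" .
    qed
    then show ?thesis unfolding schatten_class_def using bd by simp
  qed
qed

end
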